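(* Let $k,i\ge0$, let $g_1,g_2\in\mathcal M(k)$ with $g_1^*g_1\neq g_2^*g_2$. Then the quadratic form on $V_i$ \[ h\longmapsto Q_{A,2}(hg_1)-Q_{A,2}(hg_2) \] has polar rank at least $\max\{0,\,i-k-m+1\}$.
   Context: $q$ is an odd prime power. Fix $m\ge0$ and $c_0,\dots,c_m\in\mathbb F_q$ with $c_m\ne0$, and let $A(z)=c_0+\tfrac12\sum_{\ell=1}^m c_\ell(z^\ell+z^{-\ell})\in\mathbb F_q[z,z^{-1}]$. For a polynomial $f$, $Q_{A,2}(f)=\operatorname{CT}\,A(z)f(z)f(z^{-1})$, where $\operatorname{CT}$ denotes the constant term of a Laurent polynomial; equivalently $Q_{A,2}(f)=\sum_{j=0}^m c_j\sum_{i\ge j}f_if_{i-j}$. $\mathcal M(k)$ is the set of monic polynomials of degree $k$ in $\mathbb F_q[t]$, $V_i$ the space of polynomials of degree $\le i$, and for $g$ of degree $k$, $g^*(t)=t^kg(t^{-1})$. The polar rank of a quadratic form $Q$ is the rank of $(x,y)\mapsto Q(x+y)-Q(x)-Q(y)$. *)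

theory Defs
  imports "HOL-Computational_Algebra.Polynomial" "Jordan_Normal_Form.DL_Rank"
begin

text \<open>Q_{A,2}(f) = sum_{j=0}^m c_j sum_{i>=j} f_i f_{i-j}, where A is given by the
  coefficient sequence c_0,...,c_m (c :: nat => 'a).\<close>
definition QA2 :: "(nat \<Rightarrow> 'a::field) \<Rightarrow> nat \<Rightarrow> 'a poly \<Rightarrow> 'a" where
  "QA2 c m f = (\<Sum>j\<le>m. c j * (\<Sum>i\<in>{j..degree f}. coeff f i * coeff f (i - j)))"

definition polar :: "('b::ab_group_add \<Rightarrow> 'a::ab_group_add) \<Rightarrow> 'b \<Rightarrow> 'b \<Rightarrow> 'a" where
  "polar Q x y = Q (x + y) - Q x - Q y"

definition polar_rank_on_V :: "nat \<Rightarrow> ('a::field poly \<Rightarrow> 'a) \<Rightarrow> nat" where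
  "polar_rank_on_V i Q =
     vec_space.rank (i + 1)
       (mat (i + 1) (i + 1) (\<lambda>(a, b). polar Q (monom 1 a) (monom 1 b)))"

end

theory Submission
  imports Defs "HOL-Library.Groups_Big_Fun" "Jordan_Normal_Form.DL_Rank_Submatrix"
begin


lemma pick_atLeast: "pick {e..} r = e + r"
proof (induction r)
  case 0 show ?case by (simp add: Least_equality)
next
  case (Suc r) show ?case unfolding pick.simps Suc by (rule Least_equality) auto
qed

lemma pick_lessThan: "r < l \<Longrightarrow> pick {..<l} r = r"
proof (induction r)
  case 0 show ?case using 0 by (simp add: Least_equality)
next
  case (Suc r) show ?case unfolding pick.simps using Suc by (intro Least_equality) auto
qed

lemma rank_band:
  fixes A :: "'a::field mat" and E :: "int \<Rightarrow> 'a"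
  assumes A: "A \<in> carrier_mat (n+1) (n+1)"
    and AE: "\<And>a b. a \<le> n \<Longrightarrow> b \<le> n \<Longrightarrow> A $$ (a,b) = E (int a - int b)"
    and z: "\<And>d. d > int e \<Longrightarrow> E d = 0" and nz: "E (int e) \<noteq> 0" and en: "e \<le> n"
  shows "n + 1 - e \<le> vec_space.rank (n+1) A"
proof -
  define l where "l = n + 1 - e"
  have c1: "card {i. i < dim_row A \<and> i \<in> {e..}} = l"
  proof -
    have "{i. i < dim_row A \<and> i \<in> {e..}} = {e..<n+1}" using A by auto
    then show ?thesis by (simp add: l_def)
  qed
  have c2: "card {j. j < dim_col A \<and> j \<in> {..<l}} = l"
  proof -
    have "{j. j < dim_col A \<and> j \<in> {..<l}} = {..<l}" using A l_def by auto
    then show ?thesis by simp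
  qed
  define S where "S = submatrix A {e..} {..<l}"
  have Sc: "S \<in> carrier_mat l l" 
  proof -
    have "dim_row S = l" unfolding S_def by (subst dim_submatrix(1)) (rule c1)
    moreover have "dim_col S = l" unfolding S_def by (subst dim_submatrix(2)) (rule c2)
    ultimately show ?thesis by auto
  qed
  have Sidx: "S $$ (r,s) = E (int e + int r - int s)" if "r < l" "s < l" for r s
  proof -
    have "S $$ (r,s) = A $$ (pick {e..} r, pick {..<l} s)"
      unfolding S_def by (rule submatrix_index) (use that c1 c2 in simp_all)
    also have "\<dots> = A $$ (e + r, s)" using pick_lessThan[OF that(2)] by (simp add: pick_atLeast)
    also have "\<dots> = E (int e + int r - int s)" using AE[of "e+r" s] that l_def by simp
    finally show ?thesis .
  qed
  have "det S = prod_list (diag_mat S)"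
  proof (rule det_upper_triangular[OF _ Sc])
    show "upper_triangular S" unfolding upper_triangular_def
    proof (intro allI impI)
      fix r s assume "r < dim_row S" "s < r"
      then have "r < l" "s < l" using Sc by auto
      then have "S $$ (r,s) = E (int e + int r - int s)" by (rule Sidx)
      also have "\<dots> = 0" using \<open>s < r\<close> by (intro z) simp
      finally show "S $$ (r,s) = 0" .
    qed
  qed
  also have "\<dots> = (\<Prod>i<l. S $$ (i,i))"
    using Sc by (simp add: prod_list_diag_prod atLeast0LessThan)
  also have "\<dots> = (\<Prod>i<l. E (int e))" using Sidx by (intro prod.cong) auto
  finally have "det S \<noteq> 0" using nz by simp
  then have "card {j. j < n+1 \<and> j \<in> {..<l}} \<le> vec_space.rank (n+1) A"
    using vec_space.rank_gt_minor[OF A, of "{e..}" "{..<l}"] S_def by blast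
  moreover have "card {j. j < n+1 \<and> j \<in> {..<l}} = l" using c2 A by simp
  ultimately show ?thesis by (simp add: l_def)
qed


definition gz :: "'a::zero poly \<Rightarrow> int \<Rightarrow> 'a" where
  "gz g n = (if 0 \<le> n then coeff g (nat n) else 0)"

definition Cor :: "'a::comm_ring_1 poly \<Rightarrow> int \<Rightarrow> 'a" where
  "Cor g s = Sum_any (\<lambda>u. gz g (u + s) * gz g u)"

definition Bil :: "nat \<Rightarrow> nat \<Rightarrow> 'a::comm_ring_1 poly \<Rightarrow> 'a poly \<Rightarrow> 'a" where
  "Bil j N x y = (\<Sum>l\<le>N. coeff x (l + j) * coeff y l)"

lemma gz_supp: "gz g n \<noteq> 0 \<Longrightarrow> 0 \<le> n \<and> n \<le> int (degree g)"
  unfolding gz_def by (auto split: if_splits intro: ccontr dest: le_degree)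

lemma gz_int[simp]: "gz g (int n) = coeff g n"
  unfolding gz_def by simp

lemma bij_plus_int: "bij (\<lambda>u::int. u + s)"
  by (rule bijI) (auto simp: inj_def surj_def intro: exI[of _ "_ - s"])

lemma Cor_sym: "Cor g (- s) = Cor g s"
proof -
  have "Sum_any (\<lambda>u. gz g (u + - s) * gz g u) = Sum_any (\<lambda>u. gz g u * gz g (u + s))"
    by (rule Sum_any.reindex_cong[OF bij_plus_int[of s]]) (simp add: o_def)
  then show ?thesis unfolding Cor_def by (simp add: mult.commute)
qed

lemma Cor_zero: assumes "int (degree g) < \<bar>s\<bar>" shows "Cor g s = 0"
proof -
  have "(\<lambda>u. gz g (u + s) * gz g u) = (\<lambda>u. 0)"
  proof
    fix u show "gz g (u + s) * gz g u = 0"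
    proof (rule ccontr)
      assume "gz g (u + s) * gz g u \<noteq> 0"
      then have "gz g (u + s) \<noteq> 0" "gz g u \<noteq> 0" by auto
      from gz_supp[OF this(1)] gz_supp[OF this(2)] assms show False by auto
    qed
  qed
  then show ?thesis unfolding Cor_def by (simp only: Sum_any.neutral)
qed

lemma coeff_monom1: fixes g :: "'a::comm_ring_1 poly" shows "coeff (monom 1 a * g) n = gz g (int n - int a)"
  unfolding coeff_monom_mult gz_def by (auto simp: nat_diff_distrib simp del: monom_eq_1_iff)

lemma Bil_monom:
  fixes g :: "'a::comm_ring_1 poly"
  assumes "b + degree g \<le> N"
  shows "Bil j N (monom 1 a * g) (monom 1 b * g) = Cor g (int j + int b - int a)"
proof -
  define s where "s = int j + int b - int a"
  define F where "F u = gz g (u + s) * gz g u" for u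
  have "Bil j N (monom 1 a * g) (monom 1 b * g) = (\<Sum>l\<le>N. F (int l - int b))"
  proof -
    have e: "int (l + j) - int a = int l - int b + (int j + int b - int a)" for l by simp
    show ?thesis unfolding Bil_def F_def s_def coeff_monom1 e ..
  qed
  also have "\<dots> = sum F ((\<lambda>l. int l - int b) ` {..N})"
    by (subst sum.reindex) (auto simp: inj_on_def o_def)
  also have "\<dots> = Sum_any F"
  proof (rule Sum_any.expand_superset[symmetric])
    show "finite ((\<lambda>l. int l - int b) ` {..N})" by simp
    show "{a. F a \<noteq> 0} \<subseteq> (\<lambda>l. int l - int b) ` {..N}"
    proof
      fix u assume "u \<in> {a. F a \<noteq> 0}"
      then have "gz g u \<noteq> 0" unfolding F_def by auto
      from gz_supp[OF this] have "0 \<le> u" "u \<le> int (degree g)" by auto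
      then have "u = int (nat (u + int b)) - int b" "nat (u + int b) \<in> {..N}" using assms by auto
      then show "u \<in> (\<lambda>l. int l - int b) ` {..N}" by blast
    qed
  qed
  finally show ?thesis unfolding Cor_def F_def s_def .
qed

lemma coeff_refl_mult:
  fixes g :: "'a::comm_ring_1 poly"
  shows "coeff (reflect_poly g * g) n = Cor g (int (degree g) - int n)"
proof -
  define s where "s = int (degree g) - int n"
  define F where "F u = gz g (u + s) * gz g u" for u
  have "coeff (reflect_poly g * g) n = (\<Sum>i\<le>n. F (int n - int i))"
    unfolding coeff_mult F_def s_def coeff_reflect_poly
    by (intro sum.cong) (auto simp: gz_def nat_diff_distrib)
  also have "\<dots> = sum F ((\<lambda>i. int n - int i) ` {..n})"
    by (subst sum.reindex) (auto simp: inj_on_def o_def)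
  also have "\<dots> = Sum_any F"
  proof (rule Sum_any.expand_superset[symmetric])
    show "finite ((\<lambda>i. int n - int i) ` {..n})" by simp
    show "{a. F a \<noteq> 0} \<subseteq> (\<lambda>i. int n - int i) ` {..n}"
    proof
      fix u assume "u \<in> {a. F a \<noteq> 0}"
      then have "gz g u \<noteq> 0" "gz g (u + s) \<noteq> 0" unfolding F_def by auto
      from gz_supp[OF this(1)] gz_supp[OF this(2)] have "0 \<le> u" "u \<le> int n" unfolding s_def by auto
      then have "u = int n - int (nat (int n - u))" "nat (int n - u) \<in> {..n}" by auto
      then show "u \<in> (\<lambda>i. int n - int i) ` {..n}" by blast
    qed
  qed
  finally show ?thesis unfolding Cor_def F_def s_def .
qed

lemma QA2_inner:
  fixes f :: "'a::comm_ring_1 poly"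
  assumes "degree f \<le> N"
  shows "(\<Sum>i\<in>{j..degree f}. coeff f i * coeff f (i - j)) = Bil j N f f"
proof (cases "j \<le> degree f")
  case True
  have "(\<Sum>i\<in>{j..degree f}. coeff f i * coeff f (i - j))
      = (\<Sum>i\<in>{0+j..(degree f - j)+j}. coeff f i * coeff f (i - j))" using True by simp
  also have "\<dots> = (\<Sum>l\<in>{0..degree f - j}. coeff f (l + j) * coeff f l)"
    by (subst sum.shift_bounds_cl_nat_ivl) simp
  also have "\<dots> = (\<Sum>l\<le>N. coeff f (l + j) * coeff f l)"
  proof (rule sum.mono_neutral_left)
    show "{0..degree f - j} \<subseteq> {..N}" using assms by auto
    show "\<forall>l\<in>{..N} - {0..degree f - j}. coeff f (l + j) * coeff f l = 0"
      by (auto simp: coeff_eq_0)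
  qed simp
  finally show ?thesis unfolding Bil_def .
next
  case False
  then have "Bil j N f f = 0" unfolding Bil_def by (intro sum.neutral) (auto simp: coeff_eq_0)
  then show ?thesis using False by simp
qed

lemma Bil_add1: "Bil j N (x + y) z = Bil j N x z + Bil j N y z"
  unfolding Bil_def by (simp add: distrib_right sum.distrib)
lemma Bil_add2: "Bil j N z (x + y) = Bil j N z x + Bil j N z y"
  unfolding Bil_def by (simp add: distrib_left sum.distrib)

lemma polar_sum:
  fixes c :: "nat \<Rightarrow> 'a::comm_ring_1"
  shows "(\<Sum>j\<le>m. c j * Bil j N (X+Y) (X+Y)) - (\<Sum>j\<le>m. c j * Bil j N X X) - (\<Sum>j\<le>m. c j * Bil j N Y Y)
     = (\<Sum>j\<le>m. c j * (Bil j N X Y + Bil j N Y X))"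
  by (simp add: Bil_add1 Bil_add2 sum_subtractf[symmetric] algebra_simps sum.distrib)

lemma inv_even:
  assumes "finite S" "\<And>x. x \<in> S \<Longrightarrow> f x \<in> S \<and> f x \<noteq> x \<and> f (f x) = x"
  shows "even (card S)"
  using assms
proof (induction "card S" arbitrary: S rule: less_induct)
  case less
  show ?case
  proof (cases "S = {}")
    case True then show ?thesis by simp
  next
    case False
    then obtain x where x: "x \<in> S" by auto
    define S' where "S' = S - {x, f x}"
    have fx: "f x \<in> S" "f x \<noteq> x" using less.prems(2)[OF x] by auto
    have cS: "card S = card S' + 2"
    proof -
      have "{x, f x} \<subseteq> S" using x fx by auto
      then have "card S' = card S - card {x, f x}" unfolding S'_def
        using less.prems(1) by (simp add: card_Diff_subset finite_subset)
      moreover have "card {x, f x} = 2" using fx by simp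
      moreover have "card {x, f x} \<le> card S" using \<open>{x, f x} \<subseteq> S\<close> less.prems(1) card_mono by blast
      ultimately show ?thesis by simp
    qed
    have "even (card S')"
    proof (rule less.hyps)
      show "card S' < card S" using cS by simp
      show "finite S'" using less.prems(1) S'_def by simp
      fix y assume y: "y \<in> S'"
      then have yS: "y \<in> S" "y \<noteq> x" "y \<noteq> f x" unfolding S'_def by auto
      have h: "f y \<in> S" "f y \<noteq> y" "f (f y) = y" using less.prems(2)[OF yS(1)] by auto
      have "f y \<noteq> x" using h yS less.prems(2)[OF x] by metis
      moreover have "f y \<noteq> f x" using h yS less.prems(2)[OF x] by metis
      ultimately show "f y \<in> S' \<and> f y \<noteq> y \<and> f (f y) = y" using h unfolding S'_def by auto
    qed
    then show ?thesis using cS by simp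
  qed
qed

lemma two_nz:
  assumes "odd (card (UNIV :: 'a::{field,finite} set))"
  shows "(2::'a) \<noteq> 0"
proof
  assume h: "(2::'a) = 0"
  have "even (card (UNIV :: 'a set))"
  proof (rule inv_even[where f = "\<lambda>x. x + 1"])
    fix x :: 'a
    have "x + 1 + 1 = x + 2" by (metis add.assoc one_add_one)
    then show "x + 1 \<in> UNIV \<and> x + 1 \<noteq> x \<and> x + 1 + 1 = x" using h by simp
  qed simp
  then show False using assms by simp
qed



theorem lemma4p1:
  fixes c :: "nat \<Rightarrow> 'a::{field, finite}"
    and m k i :: nat
    and g1 g2 :: "'a poly"
  assumes "odd (card (UNIV :: 'a set))"
    and "c m \<noteq> 0"
    and "lead_coeff g1 = 1" and "degree g1 = k"
    and "lead_coeff g2 = 1" and "degree g2 = k"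
    and "reflect_poly g1 * g1 \<noteq> reflect_poly g2 * g2"
  shows "polar_rank_on_V i (\<lambda>h. QA2 c m (h * g1) - QA2 c m (h * g2))
           \<ge> nat (int i - int k - int m + 1)"
proof -
  note dg1 = assms(4) and dg2 = assms(6)
  define N where "N = i + k"
  define D where "D s = Cor g1 s - Cor g2 s" for s
  define E where "E d = (\<Sum>j\<le>m. c j * (D (int j - d) + D (int j + d)))" for d
  define Q where "Q = (\<lambda>h. QA2 c m (h * g1) - QA2 c m (h * g2))"
  have QA: "QA2 c m (h * g) = (\<Sum>j\<le>m. c j * Bil j N (h*g) (h*g))"
    if "degree g = k" "degree h \<le> i" for h g :: "'a poly"
  proof -
    have "degree (h * g) \<le> degree h + degree g" by (rule degree_mult_le)
    then have dN: "degree (h * g) \<le> N" using that N_def by linarith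
    show ?thesis unfolding QA2_def by (simp only: QA2_inner[OF dN])
  qed
  have entry: "polar Q (monom 1 a) (monom 1 b) = E (int a - int b)" if ab: "a \<le> i" "b \<le> i" for a b
  proof -
    define x :: "'a poly" where "x = monom 1 a"
    define y :: "'a poly" where "y = monom 1 b"
    have dx: "degree x \<le> i" "degree y \<le> i" "degree (x + y) \<le> i"
      using ab degree_add_le_max[of x y] unfolding x_def y_def by (auto simp: degree_monom_eq)
    have pg: "QA2 c m ((x+y)*g) - QA2 c m (x*g) - QA2 c m (y*g)
        = (\<Sum>j\<le>m. c j * (Cor g (int j + int b - int a) + Cor g (int j + int a - int b)))"
      if "degree g = k" for g
    proof -
      have "QA2 c m ((x+y)*g) - QA2 c m (x*g) - QA2 c m (y*g)
          = (\<Sum>j\<le>m. c j * Bil j N (x*g + y*g) (x*g + y*g)) - (\<Sum>j\<le>m. c j * Bil j N (x*g) (x*g))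
            - (\<Sum>j\<le>m. c j * Bil j N (y*g) (y*g))"
        using QA[OF that dx(1)] QA[OF that dx(2)] QA[OF that dx(3)] by (simp add: distrib_right)
      also have "\<dots> = (\<Sum>j\<le>m. c j * (Bil j N (x*g) (y*g) + Bil j N (y*g) (x*g)))"
        by (rule polar_sum)
      also have "\<dots> = (\<Sum>j\<le>m. c j * (Cor g (int j + int b - int a) + Cor g (int j + int a - int b)))"
        unfolding x_def y_def using ab that N_def by (simp add: Bil_monom)
      finally show ?thesis .
    qed
    have "polar Q x y = (QA2 c m ((x+y)*g1) - QA2 c m (x*g1) - QA2 c m (y*g1))
        - (QA2 c m ((x+y)*g2) - QA2 c m (x*g2) - QA2 c m (y*g2))"
      unfolding polar_def Q_def by (simp add: algebra_simps)
    also have "\<dots> = (\<Sum>j\<le>m. c j * (Cor g1 (int j + int b - int a) + Cor g1 (int j + int a - int b)))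
        - (\<Sum>j\<le>m. c j * (Cor g2 (int j + int b - int a) + Cor g2 (int j + int a - int b)))"
      using pg[OF dg1] pg[OF dg2] by simp
    also have "\<dots> = E (int a - int b)"
      unfolding E_def D_def sum_subtractf[symmetric]
      by (intro sum.cong refl) (simp add: algebra_simps)
    finally show ?thesis unfolding x_def y_def .
  qed
  have Dsym: "D (- s) = D s" for s unfolding D_def by (simp add: Cor_sym)
  have Dz: "D s = 0" if "int k < \<bar>s\<bar>" for s unfolding D_def using Cor_zero[of g1 s] Cor_zero[of g2 s] that dg1 dg2 by simp
  have Dnz: "\<exists>s. D s \<noteq> 0"
  proof (rule ccontr)
    assume "\<not> (\<exists>s. D s \<noteq> 0)"
    then have "\<And>s. Cor g1 s = Cor g2 s" unfolding D_def by auto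
    then have "reflect_poly g1 * g1 = reflect_poly g2 * g2"
      by (intro poly_eqI) (simp add: coeff_refl_mult dg1 dg2)
    then show False using assms(7) by simp
  qed
  define R where "R = {n::nat. D (int n) \<noteq> 0}"
  have finR: "finite R"
  proof (rule finite_subset)
    show "R \<subseteq> {..k}"
    proof
      fix x assume "x \<in> R"
      then have "D (int x) \<noteq> 0" unfolding R_def by simp
      then have "\<not> int k < \<bar>int x\<bar>" using Dz by blast
      then show "x \<in> {..k}" by simp
    qed
  qed simp
  obtain s where s: "D s \<noteq> 0" using Dnz by auto
  have "nat \<bar>s\<bar> \<in> R"
  proof (cases "0 \<le> s")
    case True then show ?thesis using s unfolding R_def by simp
  next
    case False then show ?thesis using s Dsym[of s] unfolding R_def by simp
  qed
  then have Rne: "R \<noteq> {}" by auto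
  define r where "r = Max R"
  have rR: "r \<in> R" unfolding r_def using finR Rne by simp
  then have Dr: "D (int r) \<noteq> 0" unfolding R_def by simp
  have "\<not> int k < \<bar>int r\<bar>" using Dz Dr by blast
  then have rk: "r \<le> k" by simp
  have Dabove: "D t = 0" if "int r < t" for t
  proof (rule ccontr)
    assume "D t \<noteq> 0"
    then have "nat t \<in> R" using that unfolding R_def by simp
    then have "nat t \<le> r" unfolding r_def using finR by simp
    then show False using that by simp
  qed
  have Dbelow: "D t = 0" if "t < - int r" for t
    using Dabove[of "- t"] that Dsym[of "t"] by simp
  define e where "e = m + r"
  have Ez: "E d = 0" if "int e < d" for d
    unfolding E_def
  proof (intro sum.neutral ballI)
    fix j assume "j \<in> {..m}"
    then have "int j - d < - int r" "int r < int j + d" using that e_def by auto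
    then show "c j * (D (int j - d) + D (int j + d)) = 0" using Dabove Dbelow by simp
  qed
  have Ee: "E (int e) = c m * (D (int r) + (if m = 0 then D (int r) else 0))"
  proof -
    have s1: "E (int e) = (\<Sum>j<m. c j * (D (int j - int e) + D (int j + int e)))
        + c m * (D (int m - int e) + D (int m + int e))"
    proof -
      have ins: "{..m} = insert m {..<m}" by auto
      show ?thesis unfolding E_def ins by (subst sum.insert) (auto simp: add.commute)
    qed
    have s2: "(\<Sum>j<m. c j * (D (int j - int e) + D (int j + int e))) = 0"
    proof (intro sum.neutral ballI)
      fix j assume "j \<in> {..<m}"
      then have "int j - int e < - int r" "int r < int j + int e" using e_def by auto
      then show "c j * (D (int j - int e) + D (int j + int e)) = 0" using Dabove Dbelow by simp
    qed
    have s3: "D (int m - int e) = D (int r)" using Dsym[of "int r"] e_def by simp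
    have s4: "D (int m + int e) = (if m = 0 then D (int r) else 0)"
    proof (cases "m = 0")
      case True then show ?thesis using e_def by simp
    next
      case False
      then have "int r < int m + int e" using e_def by simp
      then have "D (int m + int e) = 0" by (rule Dabove)
      then show ?thesis using False by (simp only: if_False)
    qed
    show ?thesis unfolding s1 s2 s3 s4 by (simp only: add_0_left)
  qed
  have Ene: "E (int e) \<noteq> 0"
  proof -
    have t2: "(2::'a) \<noteq> 0" by (rule two_nz[OF assms(1)])
    have "D (int r) + (if m = 0 then D (int r) else 0) \<noteq> 0"
    proof (cases "m = 0")
      case True
      have "D (int r) + (if m = 0 then D (int r) else 0) = 2 * D (int r)"
        using True by (simp only: if_True mult_2 simp_thms)
      moreover have "2 * D (int r) \<noteq> 0" using t2 Dr by (rule no_zero_divisors)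
      ultimately show ?thesis by (simp only: not_False_eq_True)
    next
      case False
      then have "D (int r) + (if m = 0 then D (int r) else 0) = D (int r)" by simp
      then show ?thesis using Dr by (simp only: not_False_eq_True)
    qed
    then show ?thesis unfolding Ee using assms(2) by (rule_tac no_zero_divisors)
  qed
  define A where "A = mat (i + 1) (i + 1) (\<lambda>(a, b). polar Q (monom 1 a) (monom 1 b))"
  have PR: "polar_rank_on_V i Q = vec_space.rank (i+1) A"
    unfolding polar_rank_on_V_def A_def ..
  show ?thesis
  proof (cases "e \<le> i")
    case True
    have "i + 1 - e \<le> vec_space.rank (i+1) A"
    proof (rule rank_band[where E = E])
      show "A \<in> carrier_mat (i + 1) (i + 1)" unfolding A_def by simp
      show "A $$ (a, b) = E (int a - int b)" if "a \<le> i" "b \<le> i" for a b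
        unfolding A_def using that entry by simp
    qed (use Ez Ene True in auto)
    moreover have "nat (int i - int k - int m + 1) \<le> i + 1 - e" using rk e_def by auto
    ultimately show ?thesis using PR unfolding Q_def by simp
  next
    case False
    then have "nat (int i - int k - int m + 1) = 0" using rk e_def by auto
    then show ?thesis by simp
  qed
qed

end
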